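(* Let $(\mathcal A,d)$ be a DGA and let $a,b_1,\dots,b_n\in\mathcal A$ be closed with $|a|$ even and each $a\wedge b_i$ exact. If $a',b_1',\dots,b_n'\in\mathcal A$ are closed with $[a']=[a]$ and $[b_i']=[b_i]$ in $H(\mathcal A)$, then $\langle a';b_1',\dots,b_n'\rangle$ is defined and $\langle a';b_1',\dots,b_n'\rangle=\langle a;b_1,\dots,b_n\rangle$. That is, the $a$-Massey product depends only on the cohomology classes $[a],[b_i]$.
   Context: A DGA is a graded-commutative differential graded algebra over $\mathbb R$; $|x|$ denotes degree and $\overline{x}=(-1)^{|x|}x$. Given closed $a,b_1,\dots,b_n\in\mathcal A$ with $|a|$ even and each $a\wedge b_i$ exact, the $a$-Massey product is the subset of $H(\mathcal A)$ $$\langle a;b_1,\dots,b_n\rangle=\Big\{\Big[\sum_{i=1}^n\overline{\xi_1}\wedge\cdots\wedge\overline{\xi_{i-1}}\wedge b_i\wedge\xi_{i+1}\wedge\cdots\wedge\xi_n\Big]\ :\ d\xi_i=a\wedge b_i\Big\}$$ (the elements inside the brackets are closed). *)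

theory Defs
  imports "HOL-Analysis.Analysis"
begin

text \<open>A (unital, associative) DGA over the reals: the carrier is a type of class
  real_algebra_1 (multiplication = wedge product), graded by the integers via
  subspaces G k (the degree-k part), with G the internal direct sum of the G k.\<close>

definition sgn_deg :: "int \<Rightarrow> 'a::real_vector \<Rightarrow> 'a" where
  "sgn_deg k x = (if even k then x else - x)"

definition dga :: "(int \<Rightarrow> 'a::real_algebra_1 set) \<Rightarrow> ('a \<Rightarrow> 'a) \<Rightarrow> bool" where
  "dga G d \<longleftrightarrow>
     (\<forall>k. subspace (G k))
   \<and> (\<forall>x. \<exists>K c. finite K \<and> (\<forall>k\<in>K. c k \<in> G k) \<and> x = (\<Sum>k\<in>K. c k))
   \<and> (\<forall>K c. finite K \<and> (\<forall>k\<in>K. c k \<in> G k) \<and> (\<Sum>k\<in>K. c k) = 0 \<longrightarrow> (\<forall>k\<in>K. c k = 0))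
   \<and> (1::'a) \<in> G 0
   \<and> (\<forall>j k x y. x \<in> G j \<and> y \<in> G k \<longrightarrow> x * y \<in> G (j + k))
   \<and> (\<forall>j k x y. x \<in> G j \<and> y \<in> G k \<longrightarrow> x * y = sgn_deg (j * k) (y * x))
   \<and> linear d
   \<and> (\<forall>k x. x \<in> G k \<longrightarrow> d x \<in> G (k + 1))
   \<and> (\<forall>x. d (d x) = 0)
   \<and> (\<forall>j x y. x \<in> G j \<longrightarrow> d (x * y) = d x * y + sgn_deg j (x * d y))"

text \<open>Cohomology class of an element (meant for closed x) in H = ker d / im d.\<close>
definition hclass :: "('a::real_vector \<Rightarrow> 'a) \<Rightarrow> 'a \<Rightarrow> 'a set" where
  "hclass d x = (\<lambda>z. x + z) ` range d"

definition exact :: "('a \<Rightarrow> 'a) \<Rightarrow> 'a \<Rightarrow> bool" where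
  "exact d x \<longleftrightarrow> x \<in> range d"

text \<open>The a-Massey product <a; b_1,...,b_n>, with a of degree p and b_i of degree q i.
  The primitives xi_i are homogeneous of degree p + q i - 1, and
  overline(xi_i) = (-1)^(p + q i - 1) xi_i.\<close>
definition massey :: "(int \<Rightarrow> 'a::real_algebra_1 set) \<Rightarrow> ('a \<Rightarrow> 'a) \<Rightarrow> int \<Rightarrow> 'a
    \<Rightarrow> (nat \<Rightarrow> int) \<Rightarrow> (nat \<Rightarrow> 'a) \<Rightarrow> nat \<Rightarrow> 'a set set" where
  "massey G d p a q b n =
    { hclass d (\<Sum>i=1..n.
        prod_list (map (\<lambda>j. sgn_deg (p + q j - 1) (\<xi> j)) [1..<i]) * b i
          * prod_list (map \<xi> [Suc i..<Suc n]))
      | \<xi>. \<forall>i\<in>{1..n}. \<xi> i \<in> G (p + q i - 1) \<and> d (\<xi> i) = a * b i }"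

end

theory Submission
  imports Defs
begin



lemma sgn_deg_if: "sgn_deg k x = (if even k then x else - x)" by (simp add: sgn_deg_def)

lemma sgn_deg_multL: "sgn_deg k (x::'a::real_algebra_1) * y = sgn_deg k (x * y)"
  by (simp add: sgn_deg_def)
lemma sgn_deg_multR: "(x::'a::real_algebra_1) * sgn_deg k y = sgn_deg k (x * y)"
  by (simp add: sgn_deg_def)
lemma sgn_deg_add: "sgn_deg k (x + y) = sgn_deg k x + sgn_deg k (y::'a::real_vector)"
  by (simp add: sgn_deg_def)
lemma sgn_deg_diff: "sgn_deg k (x - y) = sgn_deg k x - sgn_deg k (y::'a::real_vector)"
  by (simp add: sgn_deg_def)
lemma sgn_deg_sgn_deg: "sgn_deg j (sgn_deg k (x::'a::real_vector)) = sgn_deg (j + k) x"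
  by (simp add: sgn_deg_def)

definition Pp :: "(nat \<Rightarrow> 'a::real_algebra_1) \<Rightarrow> nat \<Rightarrow> 'a" where
  "Pp x n = prod_list (map x [1..<Suc n])"
definition Pb :: "(nat \<Rightarrow> int) \<Rightarrow> (nat \<Rightarrow> 'a::real_algebra_1) \<Rightarrow> nat \<Rightarrow> 'a" where
  "Pb e x n = prod_list (map (\<lambda>j. sgn_deg (e j) (x j)) [1..<Suc n])"
definition Sm :: "(nat \<Rightarrow> int) \<Rightarrow> (nat \<Rightarrow> 'a::real_algebra_1) \<Rightarrow> (nat \<Rightarrow> 'a) \<Rightarrow> nat \<Rightarrow> 'a" where
  "Sm e x y n = (\<Sum>i=1..n. prod_list (map (\<lambda>j. sgn_deg (e j) (x j)) [1..<i]) * y i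
          * prod_list (map x [Suc i..<Suc n]))"
definition Es :: "(nat \<Rightarrow> int) \<Rightarrow> nat \<Rightarrow> int" where
  "Es e n = (\<Sum>j=1..n. e j)"

lemma Pp_0[simp]: "Pp x 0 = 1" by (simp add: Pp_def)
lemma Pp_Suc[simp]: "Pp x (Suc n) = Pp x n * x (Suc n)" by (simp add: Pp_def)
lemma Es_0[simp]: "Es e 0 = 0" by (simp add: Es_def)
lemma Es_Suc[simp]: "Es e (Suc n) = Es e n + e (Suc n)" by (simp add: Es_def)
lemma Pb_eq: "Pb e x n = sgn_deg (Es e n) (Pp x n)"
proof (induction n)
  case 0 then show ?case by (simp add: Pb_def sgn_deg_def)
next
  case (Suc n)
  have "Pb e x (Suc n) = Pb e x n * sgn_deg (e (Suc n)) (x (Suc n))" by (simp add: Pb_def)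
  then show ?case using Suc by (simp add: sgn_deg_multL sgn_deg_multR sgn_deg_sgn_deg add.commute)
qed
lemma Sm_0[simp]: "Sm e x y 0 = 0" by (simp add: Sm_def)
lemma Sm_Suc: "Sm e x y (Suc n) = Sm e x y n * x (Suc n) + Pb e x n * y (Suc n)"
proof -
  have "Sm e x y (Suc n) = (\<Sum>i=1..n. prod_list (map (\<lambda>j. sgn_deg (e j) (x j)) [1..<i]) * y i
          * prod_list (map x [Suc i..<Suc (Suc n)])) + Pb e x n * y (Suc n)"
    unfolding Sm_def Pb_def by (simp add: sum.cl_ivl_Suc)
  also have "(\<Sum>i=1..n. prod_list (map (\<lambda>j. sgn_deg (e j) (x j)) [1..<i]) * y i
          * prod_list (map x [Suc i..<Suc (Suc n)])) = Sm e x y n * x (Suc n)"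
    unfolding Sm_def sum_distrib_right
    by (rule sum.cong) (auto simp: mult.assoc)
  finally show ?thesis .
qed




locale dgaL =
  fixes G :: "int \<Rightarrow> 'a::real_algebra_1 set" and d :: "'a \<Rightarrow> 'a"
  assumes dga: "dga G d"
begin

lemma sub: "subspace (G k)" using dga by (simp add: dga_def)
lemmas D = dga[unfolded dga_def]
lemma decomp: "\<exists>K c. finite K \<and> (\<forall>k\<in>K. c k \<in> G k) \<and> x = (\<Sum>k\<in>K. c k)"
  using D[THEN conjunct2, THEN conjunct1] by blast
lemma uniq: "finite K \<Longrightarrow> (\<forall>k\<in>K. c k \<in> G k) \<Longrightarrow> (\<Sum>k\<in>K. c k) = 0 \<Longrightarrow> k \<in> K \<Longrightarrow> c k = 0"
  using D[THEN conjunct2, THEN conjunct2, THEN conjunct1] by blast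
lemma mulG: "x \<in> G j \<Longrightarrow> y \<in> G k \<Longrightarrow> x * y \<in> G (j + k)"
  using D[THEN conjunct2, THEN conjunct2, THEN conjunct2, THEN conjunct2, THEN conjunct1] by blast
lemma comm: "x \<in> G j \<Longrightarrow> y \<in> G k \<Longrightarrow> x * y = sgn_deg (j * k) (y * x)"
  using D[THEN conjunct2, THEN conjunct2, THEN conjunct2, THEN conjunct2, THEN conjunct2, THEN conjunct1] by blast
lemma lin: "linear d" using dga by (simp add: dga_def)
lemma dG: "x \<in> G k \<Longrightarrow> d x \<in> G (k + 1)" using dga by (simp add: dga_def)
lemma dd: "d (d x) = 0" using dga by (simp add: dga_def)
lemma leib: "x \<in> G j \<Longrightarrow> d (x * y) = d x * y + sgn_deg j (x * d y)"
  using D by blast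

lemma d_add: "d (x + y) = d x + d y" using lin by (simp add: linear_add)
lemma d_diff: "d (x - y) = d x - d y" using lin by (simp add: linear_diff)
lemma d_0: "d 0 = 0" using lin by (simp add: linear_0)

lemma G0: "0 \<in> G k" using sub subspace_0 by blast
lemma Gadd: "x \<in> G k \<Longrightarrow> y \<in> G k \<Longrightarrow> x + y \<in> G k" using sub subspace_add by blast
lemma Gdiff: "x \<in> G k \<Longrightarrow> y \<in> G k \<Longrightarrow> x - y \<in> G k" using sub subspace_diff by blast
lemma Gneg: "x \<in> G k \<Longrightarrow> - x \<in> G k" using sub subspace_neg by blast
lemma Gsgn: "x \<in> G k \<Longrightarrow> sgn_deg j x \<in> G k" by (simp add: sgn_deg_def Gneg)

lemma central:
  assumes "a \<in> G p" "even p"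
  shows "a * z = z * a"
proof -
  obtain K c where K: "finite K" "\<forall>k\<in>K. c k \<in> G k" "z = (\<Sum>k\<in>K. c k)" using decomp by blast
  have "a * c k = c k * a" if "k \<in> K" for k
    using comm[OF assms(1), of "c k" k] K(2) that assms(2) by (simp add: sgn_deg_def)
  then show ?thesis using K(3) by (simp add: sum_distrib_left sum_distrib_right)
qed

lemma odd_sq:
  assumes "x \<in> G k" "odd k"
  shows "x * x = 0"
proof -
  have "x * x = - (x * x)" using comm[OF assms(1) assms(1)] assms(2) by (simp add: sgn_deg_def)
  then have "(2::real) *\<^sub>R (x * x) = 0" by (simp add: scaleR_2) (metis add.left_inverse)
  then show ?thesis by simp
qed

lemma homog:
  assumes "z \<in> G k" "z = d w"
  shows "\<exists>w'. w' \<in> G (k - 1) \<and> d w' = z"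
proof -
  obtain K c where K: "finite K" "\<forall>k\<in>K. c k \<in> G k" "w = (\<Sum>k\<in>K. c k)" using decomp by blast
  have dw: "d w = (\<Sum>j\<in>K. d (c j))" using K(3) lin by (simp add: linear_sum)
  define K' where "K' = insert k ((\<lambda>j. j + 1) ` K)"
  define f where "f m = (if m - 1 \<in> K then d (c (m - 1)) else 0) - (if m = k then z else 0)" for m
  have fin: "finite K'" using K(1) by (simp add: K'_def)
  have fG: "\<forall>m\<in>K'. f m \<in> G m"
  proof
    fix m assume "m \<in> K'"
    have "(if m - 1 \<in> K then d (c (m - 1)) else 0) \<in> G m"
      using dG[of "c (m - 1)" "m - 1"] K(2) G0 by auto
    moreover have "(if m = k then z else 0) \<in> G m" using assms(1) G0 by auto
    ultimately show "f m \<in> G m" unfolding f_def by (rule Gdiff)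
  qed
  have s1: "(\<Sum>m\<in>K'. (if m - 1 \<in> K then d (c (m - 1)) else 0)) = (\<Sum>j\<in>K. d (c j))"
  proof -
    have "(\<Sum>m\<in>K'. (if m - 1 \<in> K then d (c (m - 1)) else 0))
       = (\<Sum>m\<in>(\<lambda>j. j + 1) ` K. (if m - 1 \<in> K then d (c (m - 1)) else 0))"
      proof (rule sum.mono_neutral_right[OF fin])
      show "(\<lambda>j. j + 1) ` K \<subseteq> K'" by (auto simp: K'_def)
      show "\<forall>i\<in>K' - (\<lambda>j. j + 1) ` K. (if i - 1 \<in> K then d (c (i - 1)) else 0) = 0"
      proof
        fix i assume i: "i \<in> K' - (\<lambda>j. j + 1) ` K"
        have "i - 1 \<notin> K"
        proof
          assume "i - 1 \<in> K"
          then have "(i - 1) + 1 \<in> (\<lambda>j. j + 1) ` K" by blast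
          then show False using i by simp
        qed
        then show "(if i - 1 \<in> K then d (c (i - 1)) else 0) = 0" by simp
      qed
    qed
    also have "\<dots> = (\<Sum>j\<in>K. d (c j))"
      by (subst sum.reindex) (auto simp: inj_on_def)
    finally show ?thesis .
  qed
  have s2: "(\<Sum>m\<in>K'. (if m = k then z else 0)) = z"
    using fin by (simp add: K'_def)
  have "(\<Sum>m\<in>K'. f m) = 0" unfolding f_def sum_subtractf s1 s2 using dw assms(2) by simp
  then have "f k = 0" using uniq[OF fin fG] by (simp add: K'_def)
  then show ?thesis
  proof (cases "k - 1 \<in> K")
    case True
    then show ?thesis using \<open>f k = 0\<close> K(2) by (auto simp: f_def)
  next
    case False
    then show ?thesis using \<open>f k = 0\<close> G0 d_0 by (auto simp: f_def)
  qed
qed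

lemma rd_sub: "subspace (range d)" using linear_subspace_image[OF lin subspace_UNIV] by simp

lemma hclass_eq: "u - v \<in> range d \<Longrightarrow> hclass d u = hclass d v"
proof -
  assume h: "u - v \<in> range d"
  have "\<And>z. z \<in> range d \<Longrightarrow> u + z \<in> (\<lambda>z. v + z) ` range d"
  proof -
    fix z assume "z \<in> range d"
    then have "(u - v) + z \<in> range d" using h rd_sub subspace_add by blast
    then show "u + z \<in> (\<lambda>z. v + z) ` range d" by (rule rev_image_eqI[of "(u - v) + z"]) simp_all
  qed
  moreover have "\<And>z. z \<in> range d \<Longrightarrow> v + z \<in> (\<lambda>z. u + z) ` range d"
  proof -
    fix z assume "z \<in> range d"
    then have "z - (u - v) \<in> range d" using h rd_sub subspace_diff by blast
    then show "v + z \<in> (\<lambda>z. u + z) ` range d" by (rule rev_image_eqI[of "z - (u - v)"]) simp_all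
  qed
  ultimately show ?thesis unfolding hclass_def by blast
qed

end



primrec Tt :: "(nat \<Rightarrow> 'a::real_algebra_1) \<Rightarrow> (nat \<Rightarrow> 'a) \<Rightarrow> (nat \<Rightarrow> 'a) \<Rightarrow> nat \<Rightarrow> 'a" where
  "Tt x x' \<beta> 0 = 0"
| "Tt x x' \<beta> (Suc n) = Tt x x' \<beta> n * x (Suc n) + Pp x' n * \<beta> (Suc n)"

context dgaL begin

lemma Gcong: "x \<in> G j \<Longrightarrow> j = k \<Longrightarrow> x \<in> G k" by simp

lemma one_G: "1 \<in> G 0"
  using D[THEN conjunct2, THEN conjunct2, THEN conjunct2, THEN conjunct1] .

lemma d_one: "d 1 = 0"
proof -
  have "d 1 = d (1 * 1)" by simp
  also have "\<dots> = d 1 * 1 + sgn_deg 0 (1 * d 1)" by (rule leib[OF one_G])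
  finally have "d 1 = d 1 + d 1" by (simp add: sgn_deg_def)
  then show ?thesis by simp
qed

lemma homP:
  assumes "\<forall>j\<in>{1..n}. x j \<in> G (e j)"
  shows "Pp x n \<in> G (Es e n)"
  using assms
proof (induction n)
  case 0 then show ?case using one_G by simp
next
  case (Suc n)
  then show ?case by (simp, intro mulG) auto
qed

lemma homS:
  assumes "\<forall>j\<in>{1..n}. x j \<in> G (p + q j - 1) \<and> y j \<in> G (q j)"
  shows "Sm (\<lambda>j. p + q j - 1) x y n \<in> G (Es (\<lambda>j. p + q j - 1) n - (p - 1))"
  using assms
proof (induction n)
  case 0 then show ?case using G0 by simp
next
  case (Suc n)
  let ?e = "\<lambda>j. p + q j - 1"
  have IH: "Sm ?e x y n \<in> G (Es ?e n - (p - 1))" using Suc by auto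
  have xs: "x (Suc n) \<in> G (?e (Suc n))" and ys: "y (Suc n) \<in> G (q (Suc n))" using Suc.prems by auto
  have P: "Pp x n \<in> G (Es ?e n)" using homP Suc.prems by auto
  have 1: "Sm ?e x y n * x (Suc n) \<in> G (Es ?e (Suc n) - (p - 1))"
    by (rule Gcong[OF mulG[OF IH xs]]) simp
  have 2: "Pb ?e x n * y (Suc n) \<in> G (Es ?e (Suc n) - (p - 1))"
    unfolding Pb_eq by (rule Gcong[OF mulG[OF Gsgn[OF P] ys]]) simp
  show ?case unfolding Sm_Suc by (rule Gadd[OF 1 2])
qed

lemma leibP:
  assumes "a \<in> G p" "even p" "\<forall>j\<in>{1..n}. x j \<in> G (e j) \<and> d (x j) = a * y j"
  shows "d (Pp x n) = a * Sm e x y n"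
  using assms(3)
proof (induction n)
  case 0 then show ?case by (simp add: d_one)
next
  case (Suc n)
  have IH: "d (Pp x n) = a * Sm e x y n" using Suc by auto
  have P: "Pp x n \<in> G (Es e n)" using homP Suc.prems by auto
  have dx: "d (x (Suc n)) = a * y (Suc n)" using Suc.prems by auto
  have c: "Pp x n * a = a * Pp x n" using central[OF assms(1,2)] by simp
  have "d (Pp x (Suc n)) = d (Pp x n) * x (Suc n) + sgn_deg (Es e n) (Pp x n * d (x (Suc n)))"
    using leib[OF P] by simp
  also have "\<dots> = a * (Sm e x y n * x (Suc n)) + a * (Pb e x n * y (Suc n))"
    unfolding IH dx Pb_eq sgn_deg_multL sgn_deg_multR
    by (simp add: mult.assoc[symmetric] c)
  finally show ?case by (simp add: Sm_Suc distrib_left)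
qed

end



context dgaL begin

lemma lemA:
  assumes "\<alpha> \<in> G (p - 1)" "even p"
    "\<forall>j\<in>{1..n}. x j \<in> G (p + q j - 1) \<and> y j \<in> G (q j)"
  shows "Pp (\<lambda>j. x j + \<alpha> * y j) n = Pp x n + \<alpha> * Sm (\<lambda>j. p + q j - 1) x y n
       \<and> Sm (\<lambda>j. p + q j - 1) (\<lambda>j. x j + \<alpha> * y j) y n = Sm (\<lambda>j. p + q j - 1) x y n"
  using assms(3)
proof (induction n)
  case 0 then show ?case by simp
next
  case (Suc n)
  let ?e = "\<lambda>j. p + q j - 1"
  let ?x' = "\<lambda>j. x j + \<alpha> * y j"
  let ?E = "Es ?e n"
  have IH1: "Pp ?x' n = Pp x n + \<alpha> * Sm ?e x y n" and IH2: "Sm ?e ?x' y n = Sm ?e x y n"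
    using Suc by auto
  have P: "Pp x n \<in> G ?E" using homP[of n x ?e] Suc.prems by auto
  have S: "Sm ?e x y n \<in> G (?E - (p - 1))" using homS[of n x p q y] Suc.prems by auto
  have aa: "\<alpha> * \<alpha> = 0" using odd_sq[OF assms(1)] assms(2) by simp
  have op: "odd (p - 1)" using assms(2) by simp
  have Sa: "Sm ?e x y n * \<alpha> = (if even ?E then - (\<alpha> * Sm ?e x y n) else \<alpha> * Sm ?e x y n)"
    using comm[OF S assms(1)] op assms(2) by (simp add: sgn_deg_def even_mult_iff)
  have Pa: "Pp x n * \<alpha> = (if even ?E then \<alpha> * Pp x n else - (\<alpha> * Pp x n))"
    using comm[OF P assms(1)] op by (simp add: sgn_deg_def even_mult_iff)
  have aSa: "\<alpha> * (Sm ?e x y n * \<alpha>) = 0" using Sa aa by (simp add: mult.assoc[symmetric])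
  have Sa': "Sm ?e x y n * (\<alpha> * z) = (if even ?E then - (\<alpha> * (Sm ?e x y n * z)) else \<alpha> * (Sm ?e x y n * z))" for z
    using arg_cong[OF Sa, of "\<lambda>u. u * z"] by (simp add: mult.assoc)
  have Pa': "Pp x n * (\<alpha> * z) = (if even ?E then \<alpha> * (Pp x n * z) else - (\<alpha> * (Pp x n * z)))" for z
    using arg_cong[OF Pa, of "\<lambda>u. u * z"] by (simp add: mult.assoc)
  have aSa': "\<alpha> * (Sm ?e x y n * (\<alpha> * z)) = 0" for z
    using arg_cong[OF aSa, of "\<lambda>u. u * z"] by (simp add: mult.assoc)
  have Pbx: "Pb ?e ?x' n = sgn_deg ?E (Pp ?x' n)" by (simp add: Pb_eq)
  show ?case
  proof (cases "even ?E")
    case True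
    then show ?thesis using IH1 IH2 Sa' Pa' aSa'
      by (simp add: Sm_Suc Pb_eq sgn_deg_def algebra_simps)
  next
    case False
    then show ?thesis using IH1 IH2 Sa' Pa' aSa'
      by (simp add: Sm_Suc Pb_eq sgn_deg_def algebra_simps)
  qed
qed

end



context dgaL begin

lemma lemB:
  assumes "a \<in> G p" "even p" "d a = 0"
    "\<forall>j\<in>{1..n}. x j \<in> G (p + q j - 1) \<and> y j \<in> G (q j) \<and> d (x j) = a * y j \<and> \<beta> j \<in> G (q j - 1)"
  shows "Pp (\<lambda>j. x j + a * \<beta> j) n - Pp x n = a * Tt x (\<lambda>j. x j + a * \<beta> j) \<beta> n
       \<and> d (Tt x (\<lambda>j. x j + a * \<beta> j) \<beta> n)
           = Sm (\<lambda>j. p + q j - 1) (\<lambda>j. x j + a * \<beta> j) (\<lambda>j. y j + d (\<beta> j)) n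
             - Sm (\<lambda>j. p + q j - 1) x y n
       \<and> Tt x (\<lambda>j. x j + a * \<beta> j) \<beta> n \<in> G (Es (\<lambda>j. p + q j - 1) n - p)"
  using assms(4)
proof (induction n)
  case 0 then show ?case using G0 d_0 by simp
next
  case (Suc n)
  let ?e = "\<lambda>j. p + q j - 1"
  let ?x' = "\<lambda>j. x j + a * \<beta> j"
  let ?y' = "\<lambda>j. y j + d (\<beta> j)"
  let ?E = "Es ?e n"
  let ?T = "Tt x ?x' \<beta> n"
  let ?S = "Sm ?e x y n"
  let ?S' = "Sm ?e ?x' ?y' n"
  let ?P = "Pp x n"
  let ?P' = "Pp ?x' n"
  have IH1: "?P' - ?P = a * ?T" and IH2: "d ?T = ?S' - ?S" and IH3: "?T \<in> G (?E - p)"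
    using Suc by auto
  have xs: "x (Suc n) \<in> G (?e (Suc n))" and ys: "y (Suc n) \<in> G (q (Suc n))"
    and dxs: "d (x (Suc n)) = a * y (Suc n)" and bs: "\<beta> (Suc n) \<in> G (q (Suc n) - 1)"
    using Suc.prems by auto
  have dab: "d (a * \<beta> j) = a * d (\<beta> j)" for j
    using leib[OF assms(1), of "\<beta> j"] assms(2,3) by (simp add: sgn_deg_def)
  have x'G: "\<forall>j\<in>{1..n}. ?x' j \<in> G (?e j) \<and> d (?x' j) = a * ?y' j"
  proof
    fix j assume j: "j \<in> {1..n}"
    have "a * \<beta> j \<in> G (?e j)" using mulG[OF assms(1), of "\<beta> j" "q j - 1"] Suc.prems j by (simp add: algebra_simps)
    then show "?x' j \<in> G (?e j) \<and> d (?x' j) = a * ?y' j"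
      using Suc.prems j Gadd by (auto simp: d_add dab distrib_left)
  qed
  have P': "?P' \<in> G ?E" using homP[of n ?x' ?e] x'G by auto
  have dP': "d ?P' = a * ?S'" using leibP[OF assms(1,2) x'G] .
  have cT: "?T * a = a * ?T" and cS': "?S' * a = a * ?S'" using central[OF assms(1,2)] by simp_all
  have cT': "?T * (a * z) = a * (?T * z)" for z using cT by (simp add: mult.assoc[symmetric])
  have cS'': "?S' * (a * z) = a * (?S' * z)" for z using cS' by (simp add: mult.assoc[symmetric])
  have P'eq: "?P' = ?P + a * ?T" using IH1 by (simp add: algebra_simps)
  have par: "even (?E - p) = even ?E" using assms(2) by simp
  have dT: "d (Tt x ?x' \<beta> (Suc n)) = d ?T * x (Suc n) + sgn_deg ?E (?T * d (x (Suc n)))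
       + (d ?P' * \<beta> (Suc n) + sgn_deg ?E (?P' * d (\<beta> (Suc n))))"
    using leib[OF IH3, of "x (Suc n)"] leib[OF P', of "\<beta> (Suc n)"] par
    by (simp add: d_add sgn_deg_def)
  have 1: "d (Tt x ?x' \<beta> (Suc n)) = Sm ?e ?x' ?y' (Suc n) - Sm ?e x y (Suc n)"
    unfolding dT IH2 dxs dP' unfolding Sm_Suc Pb_eq P'eq
    by (cases "even ?E") (simp_all add: sgn_deg_def algebra_simps cT' cS'')
  have 2: "Pp ?x' (Suc n) - Pp x (Suc n) = a * Tt x ?x' \<beta> (Suc n)"
  proof -
    have cP: "?P * (a * z) = a * (?P * z)" for z
      using central[OF assms(1,2), of ?P] by (simp add: mult.assoc[symmetric])
    show ?thesis using P'eq cT' cP by (simp add: algebra_simps)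
  qed
  have 3: "Tt x ?x' \<beta> (Suc n) \<in> G (Es ?e (Suc n) - p)"
  proof -
    have "?T * x (Suc n) \<in> G (Es ?e (Suc n) - p)" by (rule Gcong[OF mulG[OF IH3 xs]]) simp
    moreover have "?P' * \<beta> (Suc n) \<in> G (Es ?e (Suc n) - p)" by (rule Gcong[OF mulG[OF P' bs]]) simp
    ultimately show ?thesis by (simp add: Gadd)
  qed
  show ?case using 1 2 3 by blast
qed

end



lemma Sm_cong:
  assumes "\<forall>j\<in>{1..n}. x j = x2 j \<and> y j = y2 j"
  shows "Sm e x y n = Sm e x2 y2 n"
  unfolding Sm_def
proof (rule sum.cong[OF refl])
  fix i assume i: "i \<in> {1..n}"
  have "map (\<lambda>j. sgn_deg (e j) (x j)) [1..<i] = map (\<lambda>j. sgn_deg (e j) (x2 j)) [1..<i]"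
    using assms i by (intro map_cong) auto
  moreover have "map x [Suc i..<Suc n] = map x2 [Suc i..<Suc n]"
    using assms i by (intro map_cong) auto
  moreover have "y i = y2 i" using assms i by blast
  ultimately show "prod_list (map (\<lambda>j. sgn_deg (e j) (x j)) [1..<i]) * y i * prod_list (map x [Suc i..<Suc n]) =
         prod_list (map (\<lambda>j. sgn_deg (e j) (x2 j)) [1..<i]) * y2 i * prod_list (map x2 [Suc i..<Suc n])"
    by (simp only:)
qed




theorem lemma2p5:
  fixes G :: "int \<Rightarrow> 'a::real_algebra_1 set" and d :: "'a \<Rightarrow> 'a"
    and p :: int and q :: "nat \<Rightarrow> int" and n :: nat
    and a a' :: 'a and b b' :: "nat \<Rightarrow> 'a"
  assumes "dga G d"
    and "a \<in> G p" and "even p" and "d a = 0"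
    and "\<forall>i\<in>{1..n}. b i \<in> G (q i) \<and> d (b i) = 0 \<and> exact d (a * b i)"
    and "a' \<in> G p" and "d a' = 0" and "hclass d a' = hclass d a"
    and "\<forall>i\<in>{1..n}. b' i \<in> G (q i) \<and> d (b' i) = 0 \<and> hclass d (b' i) = hclass d (b i)"
  shows "(\<forall>i\<in>{1..n}. exact d (a' * b' i)) \<and> massey G d p a' q b' n = massey G d p a q b n"
proof -
  interpret dgaL G d by unfold_locales (rule assms(1))
  let ?e = "\<lambda>j. p + q j - 1"
  have cls: "\<exists>w. v = u + d w" if "hclass d v = hclass d u" for u v
  proof -
    have "v \<in> hclass d v" unfolding hclass_def by (rule rev_image_eqI[of "d 0"]) (rule rangeI, simp add: d_0)
    then have "v \<in> (\<lambda>z. u + z) ` range d" using that unfolding hclass_def by simp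
    then obtain z where "z \<in> range d" "v = u + z" by blast
    then show ?thesis by blast
  qed
  obtain \<alpha> where al: "\<alpha> \<in> G (p - 1)" "d \<alpha> = a' - a"
  proof -
    obtain w where "a' = a + d w" using cls[OF assms(8)] by blast
    then have "a' - a = d w" by simp
    then obtain w' where "w' \<in> G (p - 1)" "d w' = a' - a" using homog[OF Gdiff[OF assms(6) assms(2)]] by blast
    then show ?thesis using that by blast
  qed
  define \<beta> where "\<beta> i = (SOME w. w \<in> G (q i - 1) \<and> d w = b' i - b i)" for i
  have be: "\<beta> i \<in> G (q i - 1) \<and> d (\<beta> i) = b' i - b i" if i: "i \<in> {1..n}" for i
  proof -
    obtain w where "b' i = b i + d w" using cls assms(9) i by blast
    then have "b' i - b i = d w" by simp
    moreover have "b' i - b i \<in> G (q i)" using Gdiff[of "b' i" "q i" "b i"] assms(5,9) i by blast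
    ultimately have "\<exists>w. w \<in> G (q i - 1) \<and> d w = b' i - b i"
      using homog by blast
    then show ?thesis unfolding \<beta>_def by (rule someI_ex)
  qed
  have dab: "d (a * z) = a * d z" for z
    using leib[OF assms(2), of z] assms(3,4) by (simp add: sgn_deg_def)
  have dalb: "d (\<alpha> * b' i) = (a' - a) * b' i" if "i \<in> {1..n}" for i
    using leib[OF al(1), of "b' i"] assms(9) that al(2) by (simp add: sgn_deg_def)
  have aGe: "a * \<beta> i \<in> G (?e i)" if "i \<in> {1..n}" for i
    using mulG[OF assms(2), of "\<beta> i" "q i - 1"] be[OF that] by (simp add: algebra_simps)
  have alGe: "\<alpha> * b' i \<in> G (?e i)" if "i \<in> {1..n}" for i
    using mulG[OF al(1), of "b' i" "q i"] assms(9) that by (simp add: algebra_simps)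
  have fwd: "(\<forall>i\<in>{1..n}. (\<xi> i + a * \<beta> i) + \<alpha> * b' i \<in> G (?e i)
                 \<and> d ((\<xi> i + a * \<beta> i) + \<alpha> * b' i) = a' * b' i)
        \<and> Sm ?e (\<lambda>j. (\<xi> j + a * \<beta> j) + \<alpha> * b' j) b' n - Sm ?e \<xi> b n \<in> range d"
    if xi: "\<forall>i\<in>{1..n}. \<xi> i \<in> G (?e i) \<and> d (\<xi> i) = a * b i" for \<xi>
  proof -
    let ?\<eta> = "\<lambda>j. \<xi> j + a * \<beta> j"
    have v: "\<forall>i\<in>{1..n}. ?\<eta> i + \<alpha> * b' i \<in> G (?e i) \<and> d (?\<eta> i + \<alpha> * b' i) = a' * b' i"
    proof
      fix i assume i: "i \<in> {1..n}"
      have "d (?\<eta> i + \<alpha> * b' i) = a * b i + a * (b' i - b i) + (a' - a) * b' i"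
        using xi i be[OF i] dalb[OF i] by (simp add: d_add dab)
      also have "\<dots> = a' * b' i" by (simp add: algebra_simps)
      finally show "?\<eta> i + \<alpha> * b' i \<in> G (?e i) \<and> d (?\<eta> i + \<alpha> * b' i) = a' * b' i"
        using xi i aGe[OF i] alGe[OF i] by (simp add: Gadd)
    qed
    have hB: "\<forall>j\<in>{1..n}. \<xi> j \<in> G (p + q j - 1) \<and> b j \<in> G (q j) \<and> d (\<xi> j) = a * b j \<and> \<beta> j \<in> G (q j - 1)"
      using xi assms(5) be by auto
    have B: "d (Tt \<xi> ?\<eta> \<beta> n) = Sm ?e ?\<eta> (\<lambda>j. b j + d (\<beta> j)) n - Sm ?e \<xi> b n"
      using lemB[OF assms(2,3,4) hB] by blast
    have B2: "Sm ?e ?\<eta> (\<lambda>j. b j + d (\<beta> j)) n = Sm ?e ?\<eta> b' n"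
      by (rule Sm_cong) (use be in auto)
    have hA: "\<forall>j\<in>{1..n}. ?\<eta> j \<in> G (p + q j - 1) \<and> b' j \<in> G (q j)"
      using xi aGe assms(9) by (auto intro: Gadd)
    have A: "Sm ?e (\<lambda>j. ?\<eta> j + \<alpha> * b' j) b' n = Sm ?e ?\<eta> b' n"
      using lemA[OF al(1) assms(3) hA] by blast
    have "Sm ?e (\<lambda>j. (\<xi> j + a * \<beta> j) + \<alpha> * b' j) b' n - Sm ?e \<xi> b n = d (Tt \<xi> ?\<eta> \<beta> n)"
      using A B B2 by simp
    then show ?thesis using v by (metis rangeI)
  qed
  have ex: "\<forall>i\<in>{1..n}. exact d (a' * b' i)"
  proof
    fix i assume i: "i \<in> {1..n}"
    have h1: "a * b i \<in> G (p + q i)" using mulG[OF assms(2), of "b i" "q i"] assms(5) i by blast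
    have "a * b i \<in> range d" using assms(5) i unfolding exact_def by blast
    then obtain w where h2: "a * b i = d w" by (auto simp: image_iff)
    obtain w' where w': "w' \<in> G (p + q i - 1)" "d w' = a * b i"
      using homog[OF h1 h2] by blast
    define \<xi> where "\<xi> j = (if j = i then w' else (SOME z. z \<in> G (?e j) \<and> d z = a * b j))" for j
    have exz: "\<exists>z. z \<in> G (?e j) \<and> d z = a * b j" if "j \<in> {1..n}" for j
    proof -
      have h1: "a * b j \<in> G (p + q j)" using mulG[OF assms(2), of "b j" "q j"] assms(5) that by blast
      have "a * b j \<in> range d" using assms(5) that unfolding exact_def by blast
      then obtain w where h2: "a * b j = d w" by (auto simp: image_iff)
      obtain w' where "w' \<in> G (p + q j - 1)" "d w' = a * b j" using homog[OF h1 h2] by blast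
      then show ?thesis by blast
    qed
    have sj: "(SOME z. z \<in> G (?e j) \<and> d z = a * b j) \<in> G (?e j) \<and> d (SOME z. z \<in> G (?e j) \<and> d z = a * b j) = a * b j"
      if "j \<in> {1..n}" for j using exz[OF that] by (rule someI_ex)
    have "\<forall>j\<in>{1..n}. \<xi> j \<in> G (?e j) \<and> d (\<xi> j) = a * b j"
    proof
      fix j assume "j \<in> {1..n}"
      then show "\<xi> j \<in> G (?e j) \<and> d (\<xi> j) = a * b j"
        using sj[of j] w' by (cases "j = i") (simp_all add: \<xi>_def)
    qed
    from conjunct1[OF fwd[OF this]] i have "d ((\<xi> i + a * \<beta> i) + \<alpha> * b' i) = a' * b' i" by blast
    then show "exact d (a' * b' i)" unfolding exact_def by (metis rangeI)
  qed
  have meq: "massey G d p c q bb n = {hclass d (Sm ?e \<xi> bb n) | \<xi>. \<forall>i\<in>{1..n}. \<xi> i \<in> G (?e i) \<and> d (\<xi> i) = c * bb i}"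
    for c bb unfolding massey_def Sm_def by simp
  have "massey G d p a' q b' n = massey G d p a q b n"
    unfolding meq
  proof (intro equalityI subsetI)
    fix X assume "X \<in> {hclass d (Sm ?e \<xi> b' n) | \<xi>. \<forall>i\<in>{1..n}. \<xi> i \<in> G (?e i) \<and> d (\<xi> i) = a' * b' i}"
    then obtain \<zeta> where X: "X = hclass d (Sm ?e \<zeta> b' n)"
      and z: "\<forall>i\<in>{1..n}. \<zeta> i \<in> G (?e i) \<and> d (\<zeta> i) = a' * b' i" by blast
    define \<xi> where "\<xi> j = \<zeta> j - \<alpha> * b' j - a * \<beta> j" for j
    have xi: "\<forall>i\<in>{1..n}. \<xi> i \<in> G (?e i) \<and> d (\<xi> i) = a * b i"
    proof
      fix i assume i: "i \<in> {1..n}"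
      have "d (\<xi> i) = a' * b' i - (a' - a) * b' i - a * (b' i - b i)"
        using z i be[OF i] dalb[OF i] by (simp add: \<xi>_def d_diff dab)
      also have "\<dots> = a * b i" by (simp add: algebra_simps)
      finally show "\<xi> i \<in> G (?e i) \<and> d (\<xi> i) = a * b i"
        using z i aGe[OF i] alGe[OF i] by (simp add: \<xi>_def Gdiff)
    qed
    have zz: "(\<lambda>j. (\<xi> j + a * \<beta> j) + \<alpha> * b' j) = \<zeta>" by (simp add: \<xi>_def)
    have "Sm ?e \<zeta> b' n - Sm ?e \<xi> b n \<in> range d" using fwd[OF xi] zz by simp
    then have "X = hclass d (Sm ?e \<xi> b n)" using X hclass_eq by simp
    then show "X \<in> {hclass d (Sm ?e \<xi> b n) | \<xi>. \<forall>i\<in>{1..n}. \<xi> i \<in> G (?e i) \<and> d (\<xi> i) = a * b i}"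
      using xi by blast
  next
    fix X assume "X \<in> {hclass d (Sm ?e \<xi> b n) | \<xi>. \<forall>i\<in>{1..n}. \<xi> i \<in> G (?e i) \<and> d (\<xi> i) = a * b i}"
    then obtain \<xi> where X: "X = hclass d (Sm ?e \<xi> b n)"
      and xi: "\<forall>i\<in>{1..n}. \<xi> i \<in> G (?e i) \<and> d (\<xi> i) = a * b i" by blast
    have "X = hclass d (Sm ?e (\<lambda>j. (\<xi> j + a * \<beta> j) + \<alpha> * b' j) b' n)"
      using X hclass_eq[OF conjunct2[OF fwd[OF xi]]] by simp
    then show "X \<in> {hclass d (Sm ?e \<xi> b' n) | \<xi>. \<forall>i\<in>{1..n}. \<xi> i \<in> G (?e i) \<and> d (\<xi> i) = a' * b' i}"
      using fwd[OF xi] by blast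
  qed
  then show ?thesis using ex by blast
qed



end
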